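(* Let $\Lambda=\{0,1,2\}^2\subset\mathbb{Z}^2$ and let $\mu$ be the probability measure on $\{0,1\}^\Lambda$ giving probability $1/7$ to each of the seven configurations whose sets of occupied sites are: $\{(1,1)\}$, $\{(1,0)\}$, $\{(2,1)\}$, $\{(1,2)\}$, $\{(0,1)\}$, $\{(0,2),(2,0)\}$, $\{(0,0),(2,2)\}$ (all other sites empty). Then $\mu$ is LTI and invariant under all symmetries of the square, but there is no probability measure on configurations of a $4\times4$ square $\Lambda'\supset\Lambda$ whose marginal on each $3\times3$ subsquare of $\Lambda'$ is the corresponding translate of $\mu$; in particular $\mu$ has no translation invariant extension to $\{0,1\}^{\mathbb{Z}^2}$.
   Context: A probability measure $\mu_\Lambda$ on $\{0,1\}^\Lambda$, $\Lambda\subset\mathbb{Z}^d$, is LTI if for all $A,A'\subset\Lambda$ with $A'$ a translate of $A$, the marginal on $\{0,1\}^{A'}$ is the translate of the marginal on $\{0,1\}^A$. Symmetries of the square are the eight dihedral symmetries of $\{0,1,2\}^2$. *)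

theory Defs
  imports "HOL-Probability.Probability"
begin

text \<open>A configuration in \<open>{0,1}^\<Lambda>\<close> is
  represented by its set of occupied sites (a subset of \<open>\<Lambda>\<close>). For finite \<open>\<Lambda>\<close>,
  a probability measure on \<open>{0,1}^\<Lambda>\<close> is a probability mass function \<open>p\<close> on
  subsets of \<open>\<Lambda>\<close>.\<close>

type_synonym site = "int \<times> int"

definition shift :: "site \<Rightarrow> site set \<Rightarrow> site set" where
  "shift v A = (\<lambda>x. (fst x + fst v, snd x + snd v)) ` A"

definition is_prob_on :: "site set \<Rightarrow> (site set \<Rightarrow> real) \<Rightarrow> bool" where
  "is_prob_on \<Lambda> p \<longleftrightarrow> finite \<Lambda> \<and> (\<forall>C. 0 \<le> p C) \<and> (\<forall>C. p C \<noteq> 0 \<longrightarrow> C \<subseteq> \<Lambda>)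
     \<and> (\<Sum>C\<in>Pow \<Lambda>. p C) = 1"

definition marginal :: "site set \<Rightarrow> (site set \<Rightarrow> real) \<Rightarrow> site set \<Rightarrow> site set \<Rightarrow> real" where
  "marginal \<Lambda> p A B = (\<Sum>C\<in>{C\<in>Pow \<Lambda>. C \<inter> A = B}. p C)"

definition LTI :: "site set \<Rightarrow> (site set \<Rightarrow> real) \<Rightarrow> bool" where
  "LTI \<Lambda> p \<longleftrightarrow> (\<forall>A v. A \<subseteq> \<Lambda> \<longrightarrow> shift v A \<subseteq> \<Lambda> \<longrightarrow>
      (\<forall>B. B \<subseteq> A \<longrightarrow> marginal \<Lambda> p (shift v A) (shift v B) = marginal \<Lambda> p A B))"

definition Lam :: "site set" where
  "Lam = {0..2} \<times> {0..2}"

definition square_syms :: "(site \<Rightarrow> site) set" where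
  "square_syms = {(\<lambda>(x,y). (x,y)), (\<lambda>(x,y). (2-x,y)), (\<lambda>(x,y). (x,2-y)), (\<lambda>(x,y). (2-x,2-y)),
                  (\<lambda>(x,y). (y,x)), (\<lambda>(x,y). (2-y,x)), (\<lambda>(x,y). (y,2-x)), (\<lambda>(x,y). (2-y,2-x))}"

definition mu :: "site set \<Rightarrow> real" where
  "mu C = (if C \<in> {{(1,1)}, {(1,0)}, {(2,1)}, {(1,2)}, {(0,1)}, {(0,2),(2,0)}, {(0,0),(2,2)}}
           then 1/7 else 0)"

definition square4 :: "int \<Rightarrow> int \<Rightarrow> site set" where
  "square4 a b = {a..a+3} \<times> {b..b+3}"

definition config_space :: "(site \<Rightarrow> bool) measure" where
  "config_space = PiM UNIV (\<lambda>_. count_space UNIV)"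

definition shift_config :: "site \<Rightarrow> (site \<Rightarrow> bool) \<Rightarrow> (site \<Rightarrow> bool)" where
  "shift_config v \<omega> = (\<lambda>x. \<omega> (fst x + fst v, snd x + snd v))"

end

theory Submission
  imports Defs
begin


lemma Lam_eq: "Lam = {(0,0),(0,1),(0,2),(1,0),(1,1),(1,2),(2,0),(2,1),(2,2)}"
proof -
  have "{0..2::int} = {0,1,2}" by auto
  then show ?thesis unfolding Lam_def by auto
qed

definition Ss :: "site set list" where
  "Ss = [{(1,1)}, {(1,0)}, {(2,1)}, {(1,2)}, {(0,1)}, {(0,2),(2,0)}, {(0,0),(2,2)}]"

lemma mu_Ss: "mu C = (if C \<in> set Ss then 1/7 else 0)"
  by (simp add: mu_def Ss_def)

lemma Ss_sub: "C \<in> set Ss \<Longrightarrow> C \<subseteq> Lam"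
  by (auto simp: Ss_def Lam_def)

lemma distinct_Ss: "distinct Ss"
  by (auto simp: Ss_def doubleton_eq_iff)

lemma marg: "marginal Lam mu A B = (\<Sum>C\<leftarrow>Ss. if C \<inter> A = B then 1/7 else 0)"
proof -
  have "marginal Lam mu A B = (\<Sum>C\<in>{C\<in>set Ss. C \<inter> A = B}. mu C)"
    unfolding marginal_def
  proof (rule sum.mono_neutral_right)
    show "finite {C \<in> Pow Lam. C \<inter> A = B}" by (simp add: Lam_def)
    show "{C\<in>set Ss. C \<inter> A = B} \<subseteq> {C \<in> Pow Lam. C \<inter> A = B}" using Ss_sub by auto
    show "\<forall>i\<in>{C \<in> Pow Lam. C \<inter> A = B} - {C\<in>set Ss. C \<inter> A = B}. mu i = 0"
      by (auto simp: mu_Ss)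
  qed
  also have "\<dots> = (\<Sum>C\<in>set Ss. if C \<inter> A = B then mu C else 0)"
    by (rule sum.inter_filter) simp
  also have "\<dots> = (\<Sum>C\<in>set Ss. if C \<inter> A = B then 1/7 else 0)"
    by (rule sum.cong) (simp_all add: mu_Ss)
  also have "\<dots> = (\<Sum>C\<leftarrow>Ss. if C \<inter> A = B then 1/7 else 0)"
    by (simp add: sum_list_distinct_conv_sum_set distinct_Ss)
  finally show ?thesis .
qed

lemma mem_shift: "x \<in> shift v A \<longleftrightarrow> (fst x - fst v, snd x - snd v) \<in> A"
  unfolding shift_def by (cases x; cases v) (auto simp: image_iff intro!: bexI[of _ "(fst x - fst v, snd x - snd v)"])

lemma shift_insert: "shift v (insert a X) = insert (fst a + fst v, snd a + snd v) (shift v X)"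
  by (simp add: shift_def)
lemma shift_empty: "shift v {} = {}"
  by (simp add: shift_def)

lemma key_conc: fixes H :: "site set \<Rightarrow> real" shows "i \<in> {-2,-1,0,1,2} \<Longrightarrow> j \<in> {-2,-1,0,1,2} \<Longrightarrow>
  (\<Sum>C\<leftarrow>Ss. H (C \<inter> shift (i,j) Lam)) = (\<Sum>C\<leftarrow>Ss. H (shift (i,j) (C \<inter> shift (-i,-j) Lam)))"
  by ((auto simp: Ss_def Int_insert_left mem_shift Lam_def shift_insert shift_empty); linarith)

lemma shift_inj: "shift v X = shift v Y \<longleftrightarrow> X = Y"
proof -
  have "inj (\<lambda>x::site. (fst x + fst v, snd x + snd v))"
    by (auto simp: inj_on_def prod_eq_iff)
  then show ?thesis unfolding shift_def by (simp add: inj_image_eq_iff)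
qed

lemma shift_Int: "shift v (X \<inter> Y) = shift v X \<inter> shift v Y"
proof -
  have "inj (\<lambda>x::site. (fst x + fst v, snd x + snd v))"
    by (auto simp: inj_on_def prod_eq_iff)
  then show ?thesis unfolding shift_def by (simp add: image_Int)
qed

lemma shift_back: "shift (i,j) (shift (-i,-j) X) = X"
  unfolding shift_def by (force simp: image_image)

lemma shift_mono: "X \<subseteq> Y \<Longrightarrow> shift v X \<subseteq> shift v Y"
  unfolding shift_def by auto

lemma prob_mu: "is_prob_on Lam mu"
proof -
  have "(\<Sum>C\<in>Pow Lam. mu C) = marginal Lam mu {} {}"
    unfolding marginal_def by (simp add: Pow_def)
  also have "\<dots> = 1" unfolding marg by (simp add: Ss_def)
  finally show ?thesis
    unfolding is_prob_on_def using Ss_sub by (auto simp: Lam_def mu_Ss)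
qed

lemma LTI_mu: "LTI Lam mu"
  unfolding LTI_def
proof (intro allI impI)
  fix A v B
  assume A: "A \<subseteq> Lam" and sA: "shift v A \<subseteq> Lam" and B: "B \<subseteq> A"
  obtain i j where v: "v = (i,j)" by (cases v)
  show "marginal Lam mu (shift v A) (shift v B) = marginal Lam mu A B"
  proof (cases "A = {}")
    case True
    then show ?thesis using B by (simp add: shift_empty)
  next
    case False
    then obtain x where x: "x \<in> A" by auto
    then have "x \<in> Lam" "(fst x + i, snd x + j) \<in> Lam"
      using A sA v by (auto simp: shift_def)
    then have ij: "i \<in> {-2,-1,0,1,2}" "j \<in> {-2,-1,0,1,2}"
      by (auto simp: Lam_def)
    define H :: "site set \<Rightarrow> real" where "H X = (if X \<inter> shift v A = shift v B then 1/7 else 0)" for X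
    have sAL: "shift v A \<subseteq> shift v Lam" using A by (rule shift_mono)
    have AL: "A \<subseteq> shift (-i,-j) Lam"
      using shift_mono[OF sA, of "(-i,-j)"] shift_back[of "-i" "-j" A] v by simp
    have "marginal Lam mu (shift v A) (shift v B) = (\<Sum>C\<leftarrow>Ss. H (C \<inter> shift (i,j) Lam))"
      unfolding marg H_def v[symmetric]
      by (rule arg_cong[where f=sum_list], rule map_cong) (use sAL in auto)
    also have "\<dots> = (\<Sum>C\<leftarrow>Ss. H (shift (i,j) (C \<inter> shift (-i,-j) Lam)))"
      by (rule key_conc[OF ij])
    also have "\<dots> = marginal Lam mu A B"
      unfolding marg H_def
    proof (rule arg_cong[where f=sum_list], rule map_cong)
      fix C
      have "shift (i, j) (C \<inter> shift (- i, - j) Lam) \<inter> shift v A = shift v (C \<inter> A)"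
        using AL v by (simp add: shift_Int[symmetric] Int_assoc Int_absorb1)
      then show "(if shift (i, j) (C \<inter> shift (- i, - j) Lam) \<inter> shift v A = shift v B then 1 / 7 else 0)
        = (if C \<inter> A = B then 1 / 7 else (0::real))"
        by (simp add: shift_inj)
    qed simp
    finally show ?thesis .
  qed
qed

lemma sym_closed: "g \<in> square_syms \<Longrightarrow> D \<in> set Ss \<Longrightarrow> g ` D \<in> set Ss"
  unfolding square_syms_def Ss_def set_simps
  by (elim insertE emptyE; simp add: doubleton_eq_iff)

lemma sym_inj: "g \<in> square_syms \<Longrightarrow> inj g"
  by (auto simp: square_syms_def inj_on_def)

lemma sym_mu: assumes g: "g \<in> square_syms" shows "mu (g ` C) = mu C"
proof -
  have inj: "inj g" by (rule sym_inj[OF g])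
  have injI: "inj_on (image g) (set Ss)"
    using inj by (auto simp: inj_on_def inj_image_eq_iff)
  have sub: "image g ` set Ss \<subseteq> set Ss" using sym_closed[OF g] by auto
  have eq: "image g ` set Ss = set Ss"
    by (rule card_subset_eq[OF _ sub]) (simp_all add: card_image[OF injI])
  have "g ` C \<in> set Ss \<longleftrightarrow> C \<in> set Ss"
  proof
    assume "g ` C \<in> set Ss"
    then obtain D where "D \<in> set Ss" "g ` C = g ` D" using eq by (metis imageE)
    then show "C \<in> set Ss" using inj by (simp add: inj_image_eq_iff)
  next
    assume "C \<in> set Ss" then show "g ` C \<in> set Ss" by (rule sym_closed[OF g])
  qed
  then show ?thesis by (simp add: mu_Ss)
qed


definition pat :: "site \<Rightarrow> (site \<Rightarrow> bool) \<Rightarrow> site set" where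
  "pat v \<omega> = {x\<in>Lam. \<omega> (fst x + fst v, snd x + snd v)}"

lemma pat_eq: "B \<subseteq> Lam \<Longrightarrow> pat v \<omega> = B \<longleftrightarrow> (\<forall>x\<in>Lam. \<omega> (fst x + fst v, snd x + snd v) = (x\<in>B))"
  unfolding pat_def by auto

lemma pat_in_Ss: "pat v \<omega> \<in> set Ss \<longleftrightarrow> (\<exists>B\<in>set Ss. \<forall>x\<in>Lam. \<omega> (fst x + fst v, snd x + snd v) = (x\<in>B))"
proof -
  have "pat v \<omega> \<in> set Ss \<longleftrightarrow> (\<exists>B\<in>set Ss. pat v \<omega> = B)" by auto
  also have "\<dots> \<longleftrightarrow> (\<exists>B\<in>set Ss. \<forall>x\<in>Lam. \<omega> (fst x + fst v, snd x + snd v) = (x\<in>B))"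
    by (rule bex_cong[OF refl], rule pat_eq[OF Ss_sub])
  finally show ?thesis .
qed

lemma comb0: assumes a1: "pat (1,0) \<omega> \<in> set Ss" and a2: "pat (0,1) \<omega> \<in> set Ss"
  and a3: "pat (1,1) \<omega> \<in> set Ss" shows "pat (0,0) \<omega> \<noteq> {(1,0)}"
proof
  assume "pat (0,0) \<omega> = {(1,0)}"
  then have "\<forall>x\<in>Lam. \<omega> (fst x + 0, snd x + 0) = (x \<in> {(1,0)})"
    using pat_eq[of "{(1,0)}" "(0,0)" \<omega>] by (simp add: Lam_def)
  then have v0: "\<not> \<omega> (0,0)" "\<not> \<omega> (0,1)" "\<not> \<omega> (0,2)" "\<omega> (1,0)" "\<not> \<omega> (1,1)" "\<not> \<omega> (1,2)"
     "\<not> \<omega> (2,0)" "\<not> \<omega> (2,1)" "\<not> \<omega> (2,2)"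
    by (simp_all add: Lam_eq)
  have w1: "\<not> \<omega> (3,0) \<and> \<not> \<omega> (3,1) \<and> \<omega> (3,2)"
    using a1 v0 unfolding pat_in_Ss by (simp add: Ss_def Lam_eq)
  have w2: "\<omega> (1,3) \<and> \<not> \<omega> (0,3) \<and> \<not> \<omega> (2,3)"
    using a2 v0 unfolding pat_in_Ss by (simp add: Ss_def Lam_eq)
  show False
    using a3 v0 w1 w2 unfolding pat_in_Ss by (simp add: Ss_def Lam_eq)
qed

lemma pat_shift: "pat (fst v + a, snd v + b) \<omega> = pat v (\<lambda>x. \<omega> (fst x + a, snd x + b))"
  unfolding pat_def by (simp add: add.assoc)

lemma comb: "pat (a,b) \<omega> \<in> set Ss \<Longrightarrow> pat (a+1,b) \<omega> \<in> set Ss \<Longrightarrow> pat (a,b+1) \<omega> \<in> set Ss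
  \<Longrightarrow> pat (a+1,b+1) \<omega> \<in> set Ss \<Longrightarrow> pat (a,b) \<omega> \<noteq> {(1,0)}"
  using comb0[of "\<lambda>x. \<omega> (fst x + a, snd x + b)"] pat_shift[of "(0,0)" a b \<omega>] pat_shift[of "(1,0)" a b \<omega>]
    pat_shift[of "(0,1)" a b \<omega>] pat_shift[of "(1,1)" a b \<omega>]
  by (simp add: add.commute)

lemma shift_pat: "shift v (pat v \<omega>) = {y \<in> shift v Lam. \<omega> y}"
  unfolding pat_def by (auto simp: mem_shift)

lemma pat_C: "C \<inter> shift v Lam = shift v (pat v (\<lambda>x. x \<in> C))"
  unfolding shift_pat by auto

lemma no_ext:
  assumes q: "is_prob_on (square4 a b) q"
    and m: "\<forall>v. shift v Lam \<subseteq> square4 a b \<longrightarrow> (\<forall>B. B \<subseteq> Lam \<longrightarrow>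
             marginal (square4 a b) q (shift v Lam) (shift v B) = mu B)"
  shows False
proof -
  let ?sq = "square4 a b"
  have fin: "finite ?sq" using q by (simp add: is_prob_on_def)
  have qnn: "\<And>C. 0 \<le> q C" using q by (simp add: is_prob_on_def)
  have W: "shift v Lam \<subseteq> ?sq" if "v \<in> {(a,b),(a+1,b),(a,b+1),(a+1,b+1)}" for v
    using that by (auto simp: subset_iff mem_shift Lam_def square4_def)
  have patL: "pat v \<omega> \<subseteq> Lam" for v \<omega> by (auto simp: pat_def)
  have claim1: "pat v (\<lambda>x. x \<in> C) \<in> set Ss"
    if C: "C \<in> Pow ?sq" "q C \<noteq> 0" and v: "v \<in> {(a,b),(a+1,b),(a,b+1),(a+1,b+1)}" for C v
  proof -
    define B where "B = pat v (\<lambda>x. x \<in> C)"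
    have "q C \<le> marginal ?sq q (shift v Lam) (shift v B)"
      unfolding marginal_def
      by (rule member_le_sum) (use C fin qnn in \<open>auto simp: B_def pat_C\<close>)
    also have "\<dots> = mu B" using m W[OF v] patL B_def by blast
    finally have "mu B \<noteq> 0" using C qnn[of C] by linarith
    then show ?thesis unfolding B_def by (simp add: mu_Ss split: if_splits)
  qed
  have "marginal ?sq q (shift (a,b) Lam) (shift (a,b) {(1,0)}) = 0"
    unfolding marginal_def
  proof (rule sum.neutral, rule ballI)
    fix C assume C: "C \<in> {C \<in> Pow ?sq. C \<inter> shift (a, b) Lam = shift (a, b) {(1, 0)}}"
    then have p: "pat (a,b) (\<lambda>x. x \<in> C) = {(1,0)}" by (simp add: pat_C shift_inj)
    show "q C = 0"
    proof (rule ccontr)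
      assume qC: "q C \<noteq> 0"
      have C': "C \<in> Pow ?sq" using C by simp
      have "pat (a,b) (\<lambda>x. x \<in> C) \<noteq> {(1,0)}"
        by (rule comb) (rule claim1[OF C' qC]; simp)+
      with p show False by simp
    qed
  qed
  moreover have "marginal ?sq q (shift (a,b) Lam) (shift (a,b) {(1,0)}) = mu {(1,0)}"
    using m W[of "(a,b)"] by (simp add: Lam_def)
  ultimately show False by (simp add: mu_def)
qed



lemma finLam: "finite Lam" by (simp add: Lam_def)

lemma cs_pred: "{\<omega> \<in> space config_space. P {x\<in>Lam. \<omega> x}} \<in> sets config_space"
proof -
  have eq: "{\<omega> \<in> space config_space. P {x\<in>Lam. \<omega> x}} =
     {\<omega> \<in> space config_space. \<exists>B\<in>{B\<in>Pow Lam. P B}. (\<forall>x\<in>Lam. \<omega> x = (x \<in> B))}"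
  proof -
    have "(P {x\<in>Lam. \<omega> x}) \<longleftrightarrow> (\<exists>B\<in>Pow Lam. P B \<and> (\<forall>x\<in>Lam. \<omega> x = (x\<in>B)))" for \<omega>
    proof
      assume "P {x\<in>Lam. \<omega> x}" then show "\<exists>B\<in>Pow Lam. P B \<and> (\<forall>x\<in>Lam. \<omega> x = (x\<in>B))"
        by (intro bexI[of _ "{x\<in>Lam. \<omega> x}"]) auto
    next
      assume "\<exists>B\<in>Pow Lam. P B \<and> (\<forall>x\<in>Lam. \<omega> x = (x\<in>B))"
      then obtain B where B: "B \<subseteq> Lam" "P B" "\<forall>x\<in>Lam. \<omega> x = (x\<in>B)" by auto
      then have "{x\<in>Lam. \<omega> x} = B" by auto
      with B show "P {x\<in>Lam. \<omega> x}" by simp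
    qed
    then show ?thesis by auto
  qed
  have "Measurable.pred config_space (\<lambda>\<omega>. \<exists>B\<in>{B\<in>Pow Lam. P B}. (\<forall>x\<in>Lam. \<omega> x = (x \<in> B)))"
    unfolding config_space_def
    apply (rule pred_intros_finite(4)[where P="\<lambda>\<omega> B. \<forall>x\<in>Lam. \<omega> x = (x \<in> B)"])
     apply (simp add: finLam)
    apply (rule pred_intros_finite(3)[where P="\<lambda>\<omega> x. \<omega> x = (x \<in> B)" for B])
     apply (simp add: finLam)
    apply (rule pred_count_space_const1[where f="\<lambda>\<omega>. \<omega> x" for x])
    apply (rule measurable_component_singleton)
    apply simp
    done
  then show ?thesis unfolding eq Measurable.pred_def .
qed

lemma cs_shift: "shift_config v \<in> measurable config_space config_space"
  unfolding shift_config_def config_space_def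
  by (rule measurable_PiM_single') (auto intro: measurable_component_singleton)

lemma no_inv:
  assumes P: "prob_space M" and S: "sets M = sets config_space"
    and D: "\<forall>v. distr M M (shift_config v) = M"
    and Mu: "\<forall>B. B \<subseteq> Lam \<longrightarrow> measure M {\<omega>\<in>space M. {x\<in>Lam. \<omega> x} = B} = mu B"
  shows False
proof -
  interpret prob_space M by fact
  have sp: "space M = space config_space" using S by (rule sets_eq_imp_space_eq)
  have ev: "{\<omega>\<in>space M. Q {x\<in>Lam. \<omega> x}} \<in> sets M" for Q
    using cs_pred[of Q] S sp by simp
  have shm: "shift_config v \<in> measurable M M" for v
    using cs_shift measurable_cong_sets[OF S S] by simp
  have null: "{\<omega>\<in>space M. {x\<in>Lam. \<omega> x} = B} \<in> null_sets M" if "B \<subseteq> Lam" "B \<notin> set Ss" for B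
    using ev[of "\<lambda>X. X = B"] Mu that by (simp add: null_sets_def emeasure_eq_measure mu_Ss)
  have ae0: "AE \<omega> in M. {x\<in>Lam. \<omega> x} \<in> set Ss"
  proof (rule AE_I')
    show "(\<Union>B\<in>Pow Lam - set Ss. {\<omega>\<in>space M. {x\<in>Lam. \<omega> x} = B}) \<in> null_sets M"
      by (rule null_sets_UN') (auto intro: countable_finite simp: finLam null)
    show "{\<omega>\<in>space M. \<not> {x\<in>Lam. \<omega> x} \<in> set Ss} \<subseteq> (\<Union>B\<in>Pow Lam - set Ss. {\<omega>\<in>space M. {x\<in>Lam. \<omega> x} = B})"
      by auto
  qed
  have aev: "AE \<omega> in M. pat v \<omega> \<in> set Ss" for v
  proof -
    have "AE \<omega> in distr M M (shift_config v). {x\<in>Lam. \<omega> x} \<in> set Ss" by (subst D[rule_format, of v]) (rule ae0)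
    then have "AE \<omega> in M. {x\<in>Lam. shift_config v \<omega> x} \<in> set Ss"
      by (subst (asm) AE_distr_iff[OF shm ev])
    then show ?thesis by (simp add: pat_def shift_config_def)
  qed
  have "AE \<omega> in M. {x\<in>Lam. \<omega> x} \<noteq> {(1,0)}"
    using aev[of "(1,0)"] aev[of "(0,1)"] aev[of "(1,1)"]
  proof eventually_elim
    case (elim \<omega>)
    then have "pat (0,0) \<omega> \<noteq> {(1,0)}" by (rule comb0)
    then show ?case by (simp add: pat_def)
  qed
  then have "emeasure M {\<omega>\<in>space M. {x\<in>Lam. \<omega> x} = {(1,0)}} = 0"
    by (subst (asm) AE_iff_measurable[OF ev[of "\<lambda>X. X = {(1,0)}"]]) simp_all
  moreover have "measure M {\<omega>\<in>space M. {x\<in>Lam. \<omega> x} = {(1,0)}} = 1/7"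
    using Mu by (simp add: Lam_def mu_def)
  ultimately show False by (simp add: emeasure_eq_measure)
qed


theorem mainTheorem14:
  shows "is_prob_on Lam mu \<and> LTI Lam mu
    \<and> (\<forall>g\<in>square_syms. \<forall>C. mu (g ` C) = mu C)
    \<and> (\<forall>a b. Lam \<subseteq> square4 a b \<longrightarrow>
         \<not> (\<exists>q. is_prob_on (square4 a b) q \<and>
               (\<forall>v. shift v Lam \<subseteq> square4 a b \<longrightarrow>
                  (\<forall>B. B \<subseteq> Lam \<longrightarrow>
                     marginal (square4 a b) q (shift v Lam) (shift v B) = mu B))))
    \<and> \<not> (\<exists>M. prob_space M \<and> sets M = sets config_space
            \<and> (\<forall>v. distr M M (shift_config v) = M)
            \<and> (\<forall>B. B \<subseteq> Lam \<longrightarrow> measure M {\<omega>\<in>space M. {x\<in>Lam. \<omega> x} = B} = mu B))"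
proof (intro conjI)
  show "is_prob_on Lam mu" by (rule prob_mu)
  show "LTI Lam mu" by (rule LTI_mu)
  show "\<forall>g\<in>square_syms. \<forall>C. mu (g ` C) = mu C" using sym_mu by blast
  show "\<forall>a b. Lam \<subseteq> square4 a b \<longrightarrow>
         \<not> (\<exists>q. is_prob_on (square4 a b) q \<and>
               (\<forall>v. shift v Lam \<subseteq> square4 a b \<longrightarrow>
                  (\<forall>B. B \<subseteq> Lam \<longrightarrow>
                     marginal (square4 a b) q (shift v Lam) (shift v B) = mu B)))"
  proof (intro allI impI notI)
    fix a b assume "\<exists>q. is_prob_on (square4 a b) q \<and>
               (\<forall>v. shift v Lam \<subseteq> square4 a b \<longrightarrow>
                  (\<forall>B. B \<subseteq> Lam \<longrightarrow>
                     marginal (square4 a b) q (shift v Lam) (shift v B) = mu B))"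
    then obtain q where "is_prob_on (square4 a b) q" "\<forall>v. shift v Lam \<subseteq> square4 a b \<longrightarrow>
                  (\<forall>B. B \<subseteq> Lam \<longrightarrow>
                     marginal (square4 a b) q (shift v Lam) (shift v B) = mu B)" by blast
    then show False by (rule no_ext)
  qed
  show "\<not> (\<exists>M. prob_space M \<and> sets M = sets config_space
            \<and> (\<forall>v. distr M M (shift_config v) = M)
            \<and> (\<forall>B. B \<subseteq> Lam \<longrightarrow> measure M {\<omega>\<in>space M. {x\<in>Lam. \<omega> x} = B} = mu B))"
  proof
    assume "\<exists>M. prob_space M \<and> sets M = sets config_space
            \<and> (\<forall>v. distr M M (shift_config v) = M)
            \<and> (\<forall>B. B \<subseteq> Lam \<longrightarrow> measure M {\<omega>\<in>space M. {x\<in>Lam. \<omega> x} = B} = mu B)"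
    then obtain M where "prob_space M" "sets M = sets config_space"
            "\<forall>v. distr M M (shift_config v) = M"
            "\<forall>B. B \<subseteq> Lam \<longrightarrow> measure M {\<omega>\<in>space M. {x\<in>Lam. \<omega> x} = B} = mu B" by blast
    then show False by (rule no_inv)
  qed
qed

end
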